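(* There is a universal constant $C>0$ and, for every positive integer $T$, a (randomized) forecasting algorithm for the $T$-step sequential binary prediction game such that against every (possibly adaptive and randomized) adversary, $\mathbb{E}[\mathsf{CalDist}(x,p)] \le C\sqrt{T}$, where $x$ is the sequence of outcomes and $p$ the sequence of predictions.
   Context: Sequential binary prediction game with horizon $T$: at each step $t \in [T]$, the adversary picks a bit $x_t \in \{0,1\}$ and simultaneously the forecaster picks a prediction $p_t \in [0,1]$; both may depend on all previous outcomes and predictions (and on their own randomness); then $x_t,p_t$ are revealed to both. For $x \in \{0,1\}^T$, let $\mathcal{C}(x) = \{q \in [0,1]^T : \sum_{t=1}^T (x_t - q_t)\mathbf{1}[q_t = \alpha] = 0 \text{ for all } \alpha \in [0,1]\}$, and $\mathsf{CalDist}(x,p) = \min_{q \in \mathcal{C}(x)} \|p - q\|_1$. The expectation is over the randomness of both players. *)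

theory Defs
  imports "HOL-Probability.Probability_Mass_Function"
begin

text \<open>Histories: the list of past (outcome, prediction) pairs, in order of time.\<close>
type_synonym history = "(bool \<times> real) list"

type_synonym forecaster = "history \<Rightarrow> real pmf"
type_synonym adversary = "history \<Rightarrow> bool pmf"

definition valid_forecaster :: "forecaster \<Rightarrow> bool" where
  "valid_forecaster F \<longleftrightarrow> (\<forall>h. set_pmf (F h) \<subseteq> {0..1})"

text \<open>The law of the full transcript after n rounds; in each round x_t and p_t are drawn
 simultaneously and independently given the history.\<close>
fun play :: "nat \<Rightarrow> adversary \<Rightarrow> forecaster \<Rightarrow> history pmf" where
  "play 0 A F = return_pmf []"
| "play (Suc n) A F =
     bind_pmf (play n A F) (\<lambda>h. bind_pmf (A h) (\<lambda>x. bind_pmf (F h) (\<lambda>p. return_pmf (h @ [(x, p)]))))"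

definition cal_set :: "bool list \<Rightarrow> real list set" where
  "cal_set x = {q. length q = length x \<and> set q \<subseteq> {0..1} \<and>
      (\<forall>\<alpha>::real. (\<Sum>t<length x. (if q ! t = \<alpha> then of_bool (x ! t) - q ! t else 0)) = 0)}"

definition caldist :: "bool list \<Rightarrow> real list \<Rightarrow> real" where
  "caldist x p = Inf ((\<lambda>q. \<Sum>t<length x. \<bar>p ! t - q ! t\<bar>) ` cal_set x)"

end

theory Submission
  imports Defs
begin


definition vg :: "nat \<Rightarrow> nat \<Rightarrow> real" where "vg m j = real j / real m"

definition Bc :: "bool list \<Rightarrow> real list \<Rightarrow> real \<Rightarrow> real" where
  "Bc xs qs c = (\<Sum>s<length qs. if qs!s = c then of_bool (xs!s) - c else 0)"

definition chs :: "nat \<Rightarrow> bool list \<Rightarrow> real list \<Rightarrow> nat" where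
  "chs m xs qs = (LEAST i. Bc xs qs (vg m i) \<le> vg m i)"

definition qnext :: "nat \<Rightarrow> bool list \<Rightarrow> real list \<Rightarrow> bool \<Rightarrow> real" where
  "qnext m xs qs x = (if x then vg m (chs m xs qs) else vg m (chs m xs qs - 1))"

fun qseq :: "nat \<Rightarrow> bool list \<Rightarrow> nat \<Rightarrow> real list" where
  "qseq m xs 0 = []"
| "qseq m xs (Suc k) = qseq m xs k @ [qnext m xs (qseq m xs k) (xs!k)]"

definition Fc :: "nat \<Rightarrow> forecaster" where
  "Fc m h = return_pmf (vg m (chs m (map fst h) (qseq m (map fst h) (length h))))"

lemma length_qseq[simp]: "length (qseq m xs k) = k"
  by (induction k) auto

lemma Bc_cong: "(\<And>s. s < length qs \<Longrightarrow> xs!s = ys!s) \<Longrightarrow> Bc xs qs c = Bc ys qs c"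
  unfolding Bc_def by (intro sum.cong) auto

lemma qnext_cong: "(\<And>s. s < length qs \<Longrightarrow> xs!s = ys!s) \<Longrightarrow> qnext m xs qs x = qnext m ys qs x"
proof -
  assume a: "\<And>s. s < length qs \<Longrightarrow> xs!s = ys!s"
  have "\<And>c. Bc xs qs c = Bc ys qs c" using a by (rule Bc_cong)
  then show ?thesis unfolding qnext_def chs_def by simp
qed

lemma qseq_cong: "(\<And>s. s < k \<Longrightarrow> xs!s = ys!s) \<Longrightarrow> qseq m xs k = qseq m ys k"
proof (induction k)
  case 0 then show ?case by simp
next
  case (Suc k)
  then have "qseq m xs k = qseq m ys k" by simp
  moreover have "qnext m xs (qseq m ys k) b = qnext m ys (qseq m ys k) b" for b
    using Suc.prems by (intro qnext_cong) auto
  ultimately show ?case using Suc.prems by simp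
qed

lemma Bc_snoc: "Bc xs (qs @ [c']) c = Bc xs qs c + (if c' = c then of_bool (xs ! length qs) - c else 0)"
  unfolding Bc_def by (simp add: nth_append)

lemma vg_inj: "m > 0 \<Longrightarrow> vg m i = vg m j \<longleftrightarrow> i = j"
  unfolding vg_def by (simp add: divide_cancel_right)

lemma vg_m: "m > 0 \<Longrightarrow> vg m m = 1" unfolding vg_def by simp
lemma vg_0: "vg m 0 = 0" unfolding vg_def by simp

lemma vg_nonneg: "0 \<le> vg m j" unfolding vg_def by simp
lemma vg_le1: "j \<le> m \<Longrightarrow> vg m j \<le> 1" unfolding vg_def by (cases "m = 0") auto

definition ginv where
  "ginv m xs qs \<longleftrightarrow> (\<forall>j\<le>m. \<bar>Bc xs qs (vg m j)\<bar> \<le> 1) \<and> (\<forall>s<length qs. \<exists>j\<le>m. qs!s = vg m j)"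

lemma chs_props:
  assumes "m > 0" "ginv m xs qs"
  shows "chs m xs qs \<le> m" "Bc xs qs (vg m (chs m xs qs)) \<le> vg m (chs m xs qs)"
    "chs m xs qs > 0 \<Longrightarrow> Bc xs qs (vg m (chs m xs qs - 1)) > vg m (chs m xs qs - 1)"
proof -
  have "\<bar>Bc xs qs (vg m m)\<bar> \<le> 1" using assms unfolding ginv_def by auto
  then have m: "Bc xs qs (vg m m) \<le> vg m m" using vg_m[OF assms(1)] by auto
  show "chs m xs qs \<le> m" unfolding chs_def by (rule Least_le) (rule m)
  show "Bc xs qs (vg m (chs m xs qs)) \<le> vg m (chs m xs qs)" unfolding chs_def by (rule LeastI) (rule m)
  show "chs m xs qs > 0 \<Longrightarrow> Bc xs qs (vg m (chs m xs qs - 1)) > vg m (chs m xs qs - 1)"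
  proof -
    assume "chs m xs qs > 0"
    then have "chs m xs qs - 1 < chs m xs qs" by simp
    then show ?thesis unfolding chs_def using not_less_Least by fastforce
  qed
qed


lemma inv_step:
  assumes "m > 0" "ginv m xs qs" and len: "length qs = k"
  shows "ginv m xs (qs @ [qnext m xs qs (xs ! k)])"
proof -
  let ?i = "chs m xs qs"
  have im: "?i \<le> m" and lo: "Bc xs qs (vg m ?i) \<le> vg m ?i"
    and hi: "?i > 0 \<Longrightarrow> Bc xs qs (vg m (?i - 1)) > vg m (?i - 1)"
    using chs_props[OF assms(1,2)] by auto
  obtain j0 where j0: "j0 \<le> m" "qnext m xs qs (xs ! k) = vg m j0"
    and upd: "\<bar>Bc xs qs (vg m j0) + (of_bool (xs ! k) - vg m j0)\<bar> \<le> 1"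
  proof (cases "xs ! k")
    case True
    have "\<bar>Bc xs qs (vg m ?i)\<bar> \<le> 1" using assms(2) im unfolding ginv_def by auto
    moreover have "vg m ?i \<le> 1" using im by (rule vg_le1)
    ultimately show ?thesis using that[of ?i] True im lo unfolding qnext_def by auto
  next
    case False
    show ?thesis
    proof (cases "?i = 0")
      case True
      have "\<bar>Bc xs qs (vg m 0)\<bar> \<le> 1" using assms(2) unfolding ginv_def by auto
      then show ?thesis using that[of 0] True False unfolding qnext_def by (auto simp: vg_0)
    next
      case nz: False
      have "\<bar>Bc xs qs (vg m (?i - 1))\<bar> \<le> 1" using assms(2) im unfolding ginv_def by auto
      moreover have "vg m (?i - 1) \<ge> 0" by (rule vg_nonneg)
      ultimately show ?thesis using that[of "?i - 1"] False im hi nz unfolding qnext_def by auto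
    qed
  qed
  show ?thesis unfolding ginv_def
  proof (intro conjI allI impI)
    fix j assume "j \<le> m"
    show "\<bar>Bc xs (qs @ [qnext m xs qs (xs ! k)]) (vg m j)\<bar> \<le> 1"
      using assms(2) \<open>j \<le> m\<close> upd j0 len unfolding Bc_snoc ginv_def
      by (cases "j = j0") (auto simp: vg_inj[OF assms(1)])
  next
    fix s assume "s < length (qs @ [qnext m xs qs (xs ! k)])"
    then show "\<exists>j\<le>m. (qs @ [qnext m xs qs (xs ! k)]) ! s = vg m j"
      using assms(2) j0 unfolding ginv_def by (cases "s < length qs") (auto simp: nth_append)
  qed
qed

lemma inv_qseq: "m > 0 \<Longrightarrow> ginv m xs (qseq m xs k)"
proof (induction k)
  case 0 then show ?case by (simp add: ginv_def Bc_def)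
next
  case (Suc k) then show ?case using inv_step[of m xs "qseq m xs k" k] by simp
qed

lemma step_dist:
  assumes "m > 0" "ginv m xs qs"
  shows "\<bar>vg m (chs m xs qs) - qnext m xs qs x\<bar> \<le> 1 / real m"
  using assms unfolding qnext_def vg_def
  by (cases x; cases "chs m xs qs") (auto simp: diff_divide_distrib[symmetric] of_nat_diff)



lemma play_supp:
  assumes "m > 0"
  shows "h \<in> set_pmf (play n A (Fc m)) \<Longrightarrow> length h = n \<and>
     (\<Sum>s<n. \<bar>snd (h!s) - qseq m (map fst h) n ! s\<bar>) \<le> real n / real m"
proof (induction n arbitrary: h)
  case 0 then show ?case by simp
next
  case (Suc n)
  from Suc.prems obtain h0 x p where h0: "h0 \<in> set_pmf (play n A (Fc m))"
    and p: "p \<in> set_pmf (Fc m h0)" and h: "h = h0 @ [(x, p)]"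
    by (auto simp: set_bind_pmf)
  from Suc.IH[OF h0] have len: "length h0 = n"
    and ih: "(\<Sum>s<n. \<bar>snd (h0!s) - qseq m (map fst h0) n ! s\<bar>) \<le> real n / real m" by auto
  define xs0 where "xs0 = map fst h0"
  define qs where "qs = qseq m xs0 n"
  have pdef: "p = vg m (chs m xs0 qs)" using p len unfolding Fc_def xs0_def qs_def by simp
  have mf: "map fst h = xs0 @ [x]" unfolding h xs0_def by simp
  have lx: "length xs0 = n" unfolding xs0_def using len by simp
  have q1: "qseq m (xs0 @ [x]) n = qs" unfolding qs_def
    by (rule qseq_cong) (simp add: nth_append lx)
  have q2: "qnext m (xs0 @ [x]) qs x = qnext m xs0 qs x"
    by (rule qnext_cong) (simp add: nth_append lx qs_def)
  have qS: "qseq m (xs0 @ [x]) (Suc n) = qs @ [qnext m xs0 qs x]"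
    using q1 q2 lx by (simp add: nth_append)
  have hS: "map fst (h0 @ [(x,p)]) = xs0 @ [x]" unfolding xs0_def by simp
  have gi: "ginv m xs0 qs" unfolding qs_def using inv_qseq[OF assms] .
  have last: "\<bar>p - qnext m xs0 qs x\<bar> \<le> 1 / real m"
    unfolding pdef by (rule step_dist[OF assms gi])
  have lq: "length qs = n" unfolding qs_def by simp
  have "(\<Sum>s<Suc n. \<bar>snd (h!s) - qseq m (map fst h) (Suc n) ! s\<bar>)
      = (\<Sum>s<n. \<bar>snd (h0!s) - qs ! s\<bar>) + \<bar>p - qnext m xs0 qs x\<bar>"
    unfolding h hS qS by (simp add: nth_append len lq)
  also have "\<dots> \<le> real n / real m + 1 / real m" using ih last unfolding xs0_def qs_def by simp
  also have "\<dots> = real (Suc n) / real m" by (simp add: add_divide_distrib)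
  finally show ?case using len h by simp
qed

lemma aux_k: "(k::real) > 0 \<Longrightarrow> k * (c - S / k) = k * c - S"
  by (simp add: field_simps)

definition Avg :: "(nat \<Rightarrow> real) \<Rightarrow> (nat \<Rightarrow> real) \<Rightarrow> nat \<Rightarrow> real \<Rightarrow> real" where
  "Avg g y n c = (\<Sum>s<n. if g s = c then y s else 0) / real (card {s. s < n \<and> g s = c})"

lemma fiber_sum: fixes g :: "nat \<Rightarrow> 'a" and f :: "nat \<Rightarrow> real" shows "(\<Sum>s<n. if g s = c then f s else 0) = (\<Sum>s\<in>{s. s < n \<and> g s = c}. f s)"
proof -
  have e: "{s. s < n \<and> g s = c} = {s \<in> {..<n}. g s = c}" by auto
  have "(\<Sum>s\<in>{s \<in> {..<n}. g s = c}. f s) = (\<Sum>s<n. if g s = c then f s else 0)"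
    by (rule sum.inter_filter) simp
  then show ?thesis unfolding e by simp
qed

lemma fiber_card_pos: fixes g :: "nat \<Rightarrow> 'a" shows "t < n \<Longrightarrow> card {s. s < n \<and> g s = g t} > 0"
proof -
  assume t: "t < n"
  have "finite {s. s < n \<and> g s = g t}" by (rule finite_subset[of _ "{..<n}"]) auto
  then show ?thesis using t by (subst card_gt_0_iff) auto
qed

lemma regroup: fixes g :: "nat \<Rightarrow> 'a" and f :: "nat \<Rightarrow> real" shows "(\<Sum>t<n. f t) = (\<Sum>c\<in>g ` {..<n}. \<Sum>t\<in>{s. s < n \<and> g s = c}. f t)"
proof -
  have "(\<Sum>t<n. f t) = (\<Sum>c\<in>g ` {..<n}. \<Sum>t\<in>{x. x \<in> {..<n} \<and> g x = c}. f t)"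
    using sum.image_gen[OF finite_lessThan, where h=f and g=g] by simp
  then show ?thesis by simp
qed

lemma cal_generic:
  "(\<Sum>t<n. if Avg g y n (g t) = \<alpha> then y t - Avg g y n (g t) else 0) = 0"
proof -
  have "(\<Sum>t<n. if Avg g y n (g t) = \<alpha> then y t - Avg g y n (g t) else 0)
     = (\<Sum>c\<in>g ` {..<n}. \<Sum>t\<in>{s. s < n \<and> g s = c}. if Avg g y n (g t) = \<alpha> then y t - Avg g y n (g t) else 0)"
    by (rule regroup)
  also have "\<dots> = (\<Sum>c\<in>g ` {..<n}. 0)"
  proof (rule sum.cong[OF refl])
    fix c assume "c \<in> g ` {..<n}"
    then obtain t0 where t0: "t0 < n" "c = g t0" by auto
    let ?F = "{s. s < n \<and> g s = c}"
    have cp: "real (card ?F) > 0" using fiber_card_pos[OF t0(1), of g] t0 by simp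
    have "(\<Sum>t\<in>?F. if Avg g y n (g t) = \<alpha> then y t - Avg g y n (g t) else 0)
        = (\<Sum>t\<in>?F. if Avg g y n c = \<alpha> then y t - Avg g y n c else 0)"
      by (rule sum.cong) auto
    also have "\<dots> = (if Avg g y n c = \<alpha> then (\<Sum>t\<in>?F. y t) - real (card ?F) * Avg g y n c else 0)"
      by (simp add: sum_subtractf)
    also have "\<dots> = 0" using cp t0 unfolding Avg_def fiber_sum by (auto simp: field_simps)
    finally show "(\<Sum>t\<in>?F. if Avg g y n (g t) = \<alpha> then y t - Avg g y n (g t) else 0) = 0" .
  qed
  finally show ?thesis by simp
qed

lemma dist_generic:
  "(\<Sum>t<n. \<bar>g t - Avg g y n (g t)\<bar>) = (\<Sum>c\<in>g ` {..<n}. \<bar>\<Sum>s<n. if g s = c then y s - c else 0\<bar>)"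
proof -
  have "(\<Sum>t<n. \<bar>g t - Avg g y n (g t)\<bar>)
     = (\<Sum>c\<in>g ` {..<n}. \<Sum>t\<in>{s. s < n \<and> g s = c}. \<bar>g t - Avg g y n (g t)\<bar>)"
    by (rule regroup)
  also have "\<dots> = (\<Sum>c\<in>g ` {..<n}. \<bar>\<Sum>s<n. if g s = c then y s - c else 0\<bar>)"
  proof (rule sum.cong[OF refl])
    fix c assume "c \<in> g ` {..<n}"
    then obtain t0 where t0: "t0 < n" "c = g t0" by auto
    let ?F = "{s. s < n \<and> g s = c}"
    have cp: "real (card ?F) > 0" using fiber_card_pos[OF t0(1), of g] t0 by simp
    have "(\<Sum>t\<in>?F. \<bar>g t - Avg g y n (g t)\<bar>) = (\<Sum>t\<in>?F. \<bar>c - Avg g y n c\<bar>)"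
      by (rule sum.cong) auto
    also have "\<dots> = real (card ?F) * \<bar>c - Avg g y n c\<bar>" by simp
    also have "\<dots> = \<bar>real (card ?F) * c - (\<Sum>t\<in>?F. y t)\<bar>"
    proof -
      have "real (card ?F) * (c - (\<Sum>t\<in>?F. y t) / real (card ?F)) = real (card ?F) * c - (\<Sum>t\<in>?F. y t)"
        using cp aux_k by simp
      moreover have "real (card ?F) * \<bar>c - (\<Sum>t\<in>?F. y t) / real (card ?F)\<bar> = \<bar>real (card ?F) * (c - (\<Sum>t\<in>?F. y t) / real (card ?F))\<bar>"
        by (simp add: abs_mult)
      ultimately show ?thesis unfolding Avg_def fiber_sum by simp
    qed
    also have "\<dots> = \<bar>\<Sum>s<n. if g s = c then y s - c else 0\<bar>"
      unfolding fiber_sum by (simp add: sum_subtractf abs_minus_commute)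
    finally show "(\<Sum>t\<in>?F. \<bar>g t - Avg g y n (g t)\<bar>) = \<bar>\<Sum>s<n. if g s = c then y s - c else 0\<bar>" .
  qed
  finally show ?thesis .
qed

lemma Avg_01:
  assumes "t < n" "\<And>s. 0 \<le> y s" "\<And>s. y s \<le> 1"
  shows "0 \<le> Avg g y n (g t)" "Avg g y n (g t) \<le> 1"
proof -
  let ?F = "{s. s < n \<and> g s = g t}"
  have cp: "real (card ?F) > 0" using fiber_card_pos[OF assms(1), of g] by simp
  have s0: "0 \<le> (\<Sum>s\<in>?F. y s)" using assms by (simp add: sum_nonneg)
  have s1: "(\<Sum>s\<in>?F. y s) \<le> real (card ?F)"
    using sum_mono[of ?F y "\<lambda>_. 1"] assms by simp
  show "0 \<le> Avg g y n (g t)" unfolding Avg_def fiber_sum using s0 cp by simp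
  show "Avg g y n (g t) \<le> 1" unfolding Avg_def fiber_sum using s1 cp by simp
qed



lemma caldist_bound:
  assumes m: "m > 0" and hs: "h \<in> set_pmf (play T A (Fc m))"
  shows "caldist (map fst h) (map snd h) \<le> real T / real m + (real m + 1)"
proof -
  from play_supp[OF m hs] have len: "length h = T"
    and D: "(\<Sum>s<T. \<bar>snd (h!s) - qseq m (map fst h) T ! s\<bar>) \<le> real T / real m" by auto
  define xs where "xs = map fst h"
  define qs where "qs = qseq m xs T"
  define g where "g = (\<lambda>t. qs ! t)"
  define y where "y = (\<lambda>t. of_bool (xs ! t) :: real)"
  define q' where "q' = map (\<lambda>t. Avg g y T (g t)) [0..<T]"
  have lxs: "length xs = T" unfolding xs_def using len by simp
  have lq: "length qs = T" unfolding qs_def by simp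
  have gi: "ginv m xs qs" unfolding qs_def using inv_qseq[OF m] .
  have q'nth: "t < T \<Longrightarrow> q' ! t = Avg g y T (g t)" for t unfolding q'_def by simp
  have y01: "0 \<le> y s" "y s \<le> 1" for s unfolding y_def by auto
  have mem: "q' \<in> cal_set xs"
    unfolding cal_set_def
  proof (intro CollectI conjI allI)
    show "length q' = length xs" unfolding q'_def lxs by simp
    show "set q' \<subseteq> {0..1}"
    proof
      fix a assume "a \<in> set q'"
      then obtain t where t: "t < T" "a = Avg g y T (g t)" unfolding q'_def by auto
      then show "a \<in> {0..1}" using Avg_01[OF t(1), of y g] y01 by auto
    qed
    fix \<alpha> :: real
    have "(\<Sum>t<length xs. if q' ! t = \<alpha> then of_bool (xs ! t) - q' ! t else 0)
        = (\<Sum>t<T. if Avg g y T (g t) = \<alpha> then y t - Avg g y T (g t) else 0)"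
      unfolding lxs by (rule sum.cong) (auto simp: q'nth y_def)
    also have "\<dots> = 0" by (rule cal_generic)
    finally show "(\<Sum>t<length xs. if q' ! t = \<alpha> then of_bool (xs ! t) - q' ! t else 0) = 0" .
  qed
  have "caldist xs (map snd h) \<le> (\<Sum>t<length xs. \<bar>map snd h ! t - q' ! t\<bar>)"
    unfolding caldist_def
  proof (rule cInf_lower)
    show "(\<Sum>t<length xs. \<bar>map snd h ! t - q' ! t\<bar>) \<in> (\<lambda>q. \<Sum>t<length xs. \<bar>map snd h ! t - q ! t\<bar>) ` cal_set xs"
      using mem by blast
    show "bdd_below ((\<lambda>q. \<Sum>t<length xs. \<bar>map snd h ! t - q ! t\<bar>) ` cal_set xs)"
      by (rule bdd_belowI[of _ 0]) (auto intro: sum_nonneg)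
  qed
  also have "\<dots> = (\<Sum>t<T. \<bar>snd (h!t) - q' ! t\<bar>)" unfolding lxs by (rule sum.cong) (auto simp: len)
  also have "\<dots> \<le> (\<Sum>t<T. \<bar>snd (h!t) - g t\<bar> + \<bar>g t - Avg g y T (g t)\<bar>)"
    by (rule sum_mono) (simp add: q'nth abs_triangle_ineq[THEN order_trans, OF eq_refl] )
  also have "\<dots> = (\<Sum>t<T. \<bar>snd (h!t) - g t\<bar>) + (\<Sum>t<T. \<bar>g t - Avg g y T (g t)\<bar>)"
    by (rule sum.distrib)
  also have "(\<Sum>t<T. \<bar>snd (h!t) - g t\<bar>) \<le> real T / real m"
    using D unfolding g_def qs_def xs_def .
  also have "(\<Sum>t<T. \<bar>g t - Avg g y T (g t)\<bar>) = (\<Sum>c\<in>g ` {..<T}. \<bar>\<Sum>s<T. if g s = c then y s - c else 0\<bar>)"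
    by (rule dist_generic)
  also have "\<dots> = (\<Sum>c\<in>g ` {..<T}. \<bar>Bc xs qs c\<bar>)"
    unfolding Bc_def lq g_def y_def by simp
  also have "\<dots> \<le> (\<Sum>c\<in>vg m ` {..m}. \<bar>Bc xs qs c\<bar>)"
  proof (rule sum_mono2)
    show "g ` {..<T} \<subseteq> vg m ` {..m}" using gi lq unfolding ginv_def g_def by fastforce
  qed auto
  also have "\<dots> \<le> (\<Sum>j\<in>{..m}. \<bar>Bc xs qs (vg m j)\<bar>)"
    using sum_image_le[of "{..m}" "\<lambda>c. \<bar>Bc xs qs c\<bar>" "vg m"] by (simp add: o_def)
  also have "\<dots> \<le> (\<Sum>j\<in>{..m}. 1)"
    by (rule sum_mono) (use gi in \<open>auto simp: ginv_def\<close>)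
  finally show ?thesis unfolding xs_def by simp
qed

lemma numeric:
  assumes "T > 0" 
  shows "real T / real (nat \<lceil>sqrt (real T)\<rceil>) + (real (nat \<lceil>sqrt (real T)\<rceil>) + 1) \<le> 4 * sqrt (real T)"
proof -
  let ?s = "sqrt (real T)"
  let ?m = "real (nat \<lceil>?s\<rceil>)"
  have s1: "?s \<ge> 1" using assms by simp
  have m1: "?m \<ge> ?s" by linarith
  have "?m = of_int \<lceil>?s\<rceil>" by simp
  then have m2: "?m \<le> ?s + 1" by linarith
  have "real T / ?m \<le> real T / ?s"
    using m1 s1 by (intro divide_left_mono) auto
  also have "\<dots> = ?s" using s1 by (simp add: real_div_sqrt)
  finally show ?thesis using m2 s1 by linarith
qed

theorem theorem3:
  shows "\<exists>C>0. \<forall>T::nat. T > 0 \<longrightarrow>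
    (\<exists>F. valid_forecaster F \<and>
      (\<forall>A::adversary. measure_pmf.expectation (play T A F)
          (\<lambda>h. caldist (map fst h) (map snd h)) \<le> C * sqrt (real T)))"
proof (intro exI[of _ 4] conjI allI impI)
  fix T :: nat assume T: "T > 0"
  define m where "m = nat \<lceil>sqrt (real T)\<rceil>"
  have m: "m > 0" unfolding m_def using T by simp
  have bnd: "real T / real m + (real m + 1) \<le> 4 * sqrt (real T)" unfolding m_def by (rule numeric[OF T])
  show "\<exists>F. valid_forecaster F \<and>
      (\<forall>A::adversary. measure_pmf.expectation (play T A F)
          (\<lambda>h. caldist (map fst h) (map snd h)) \<le> 4 * sqrt (real T))"
  proof (intro exI[of _ "Fc m"] conjI allI)
    show "valid_forecaster (Fc m)" unfolding valid_forecaster_def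
    proof
      fix h :: history
      have "chs m (map fst h) (qseq m (map fst h) (length h)) \<le> m"
        using chs_props(1)[OF m inv_qseq[OF m]] .
      then show "set_pmf (Fc m h) \<subseteq> {0..1}" unfolding Fc_def using vg_nonneg vg_le1 by auto
    qed
    fix A :: adversary
    have ae: "AE h in measure_pmf (play T A (Fc m)). caldist (map fst h) (map snd h) \<le> 4 * sqrt (real T)"
      unfolding AE_measure_pmf_iff using caldist_bound[OF m] bnd by (meson order_trans)
    show "measure_pmf.expectation (play T A (Fc m)) (\<lambda>h. caldist (map fst h) (map snd h)) \<le> 4 * sqrt (real T)"
    proof (cases "integrable (measure_pmf (play T A (Fc m))) (\<lambda>h. caldist (map fst h) (map snd h))")
      case True
      then show ?thesis using measure_pmf.integral_le_const ae by blast
    next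
      case False
      then show ?thesis by (simp add: not_integrable_integral_eq)
    qed
  qed
qed (simp)


end
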